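(* Let $p\in(0,1)$ and $0<\alpha<\frac{p}{1-p}$. Let $E:\mathbb{R}_{\ge0}\to\mathbb{R}_{\ge0}$ be a proper error score such that the limits $\lim_{x\to\infty}\frac{E'(x)}{E(x)}$, $\lim_{x\to\infty}\frac{E(x)}{E(ax)}$ and $\lim_{x\to\infty}\frac{E'(x)}{E'(ax)}$ exist (in the extended reals) for every $a\in(0,1)$, and suppose there are constants $k,\nu>0$ with $E(x)\le k e^{-\nu x}$ for all $x\ge0$. Then $E$ is undulating (with respect to $p,\alpha$).
   Context: A proper error score is a function $E:\mathbb{R}_{\ge0}\to\mathbb{R}_{\ge0}$ that is twice differentiable, with $E(x)>0$ and $E'(x)<0$ for all $x\ge0$, $E(0)=c_0>0$, and $\lim_{x\to\infty}E(x)=0$. Given $p\in(0,1)$ and $0<\alpha<\frac{p}{1-p}$, an error score $E$ is undulating if there exist $z_1,z_2\in\mathbb{R}$ such that $\frac{E'(pm)}{E'(\alpha(1-p)m)}>\frac{\alpha(1-p)}{p}$ for all $m\ge 0$ with $m<z_1$, and $\frac{E'(pm)}{E'(\alpha(1-p)m)}<\frac{\alpha(1-p)}{p}$ for all $m>z_2$. *)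

theory Defs
  imports "HOL-Analysis.Analysis"
begin

definition proper_error_score :: "(real \<Rightarrow> real) \<Rightarrow> (real \<Rightarrow> real) \<Rightarrow> bool" where
  "proper_error_score E E' \<longleftrightarrow>
     (\<exists>E''. \<forall>x\<ge>0. (E has_real_derivative E' x) (at x within {0..}) \<and>
                    (E' has_real_derivative E'' x) (at x within {0..})) \<and>
     (\<forall>x\<ge>0. E x > 0 \<and> E' x < 0) \<and>
     E 0 > 0 \<and>
     (E \<longlongrightarrow> 0) at_top"

definition undulating :: "real \<Rightarrow> real \<Rightarrow> (real \<Rightarrow> real) \<Rightarrow> bool" where
  "undulating p \<alpha> E' \<longleftrightarrow>
     (\<exists>z1 z2::real.
        (\<forall>m. 0 \<le> m \<and> m < z1 \<longrightarrow> E' (p * m) / E' (\<alpha> * (1 - p) * m) > \<alpha> * (1 - p) / p) \<and>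
        (\<forall>m. m > z2 \<longrightarrow> E' (p * m) / E' (\<alpha> * (1 - p) * m) < \<alpha> * (1 - p) / p))"

end

theory Submission
  imports Defs
begin

lemma key_false:
  fixes E E' :: "real \<Rightarrow> real" and a k \<nu> X0 :: real
  assumes a: "0 < a" "a < 1"
    and der: "\<And>x. x > 0 \<Longrightarrow> (E has_real_derivative E' x) (at x)"
    and pos: "\<And>x. x \<ge> 0 \<Longrightarrow> E x > 0"
    and lim: "(E \<longlongrightarrow> 0) at_top"
    and kp: "0 < k" and nu: "0 < \<nu>" and bd: "\<forall>x\<ge>0. E x \<le> k * exp (- \<nu> * x)"
    and X0: "X0 > 0" "\<And>x. x \<ge> X0 \<Longrightarrow> E' x < (a/2) * E' (a * x)"
  shows False
proof -
  define h where "h y = E y - E (a*y) / 2" for y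
  have hder: "(h has_real_derivative (E' y - E' (a*y) * a / 2)) (at y)" if "y > 0" for y
  proof -
    have "((\<lambda>y. E (a*y)) has_real_derivative E' (a*y) * a) (at y)"
      by (rule DERIV_chain2[OF der]) (use a that in \<open>auto intro!: derivative_eq_intros\<close>)
    then show ?thesis unfolding h_def
      by (auto intro!: derivative_eq_intros der that)
  qed
  have hmono: "h x \<ge> h y" if "X0 \<le> x" "x \<le> y" for x y
  proof (rule DERIV_nonpos_imp_nonincreasing[OF that(2)])
    fix t assume t: "x \<le> t" "t \<le> y"
    then have "t \<ge> X0" using that by auto
    then have "E' t < (a/2) * E' (a * t)" by (rule X0(2))
    then have "E' t - E' (a*t) * a / 2 \<le> 0" by (simp add: algebra_simps)
    moreover have "t > 0" using \<open>t \<ge> X0\<close> X0(1) by linarith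
    ultimately show "\<exists>d. DERIV h t :> d \<and> d \<le> 0"
      using hder[of t] by blast
  qed
  have lim2: "((\<lambda>y. E (a*y)) \<longlongrightarrow> 0) at_top"
  proof (rule filterlim_compose[OF lim])
    show "filterlim (\<lambda>y. a * y) at_top at_top"
      by (rule filterlim_tendsto_pos_mult_at_top[OF tendsto_const a(1) filterlim_ident])
  qed
  have hlim: "(h \<longlongrightarrow> 0) at_top"
    unfolding h_def using tendsto_diff[OF lim tendsto_divide[OF lim2 tendsto_const[of 2]]] by simp
  have hnn: "h x \<ge> 0" if "x \<ge> X0" for x
  proof (rule tendsto_le[OF trivial_limit_at_top_linorder tendsto_const hlim])
    show "\<forall>\<^sub>F y in at_top. h y \<le> h x"
      using eventually_ge_at_top[of x] by eventually_elim (use hmono that in auto)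
  qed
  have step: "E (a*x) \<le> 2 * E x" if "x \<ge> X0" for x
    using hnn[OF that] unfolding h_def by simp
  define b where "b = 1/a"
  have b1: "b > 1" using a unfolding b_def by auto
  define X where "X = max X0 (max 1 ((ln 2 + 1) / (\<nu> * (b - 1))))"
  have XX0: "X \<ge> X0" and X1: "X \<ge> 1" and X2: "X \<ge> (ln 2 + 1) / (\<nu> * (b - 1))"
    unfolding X_def by auto
  define y where "y n = X * b^n" for n :: nat
  have yge: "y n \<ge> X" for n
    unfolding y_def using X1 b1 by (simp add: one_le_power)
  have ystep: "a * y (Suc n) = y n" for n
    unfolding y_def b_def using a by simp
  have ind: "E X \<le> 2^n * E (y n)" for n
  proof (induction n)
    case 0 then show ?case by (simp add: y_def)
  next
    case (Suc n)
    have "E (y n) \<le> 2 * E (y (Suc n))"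
      using step[of "y (Suc n)"] ystep[of n] yge[of "Suc n"] XX0 by simp
    then have "2^n * E (y n) \<le> 2^n * (2 * E (y (Suc n)))" by (intro mult_left_mono) auto
    also have "\<dots> = 2^(Suc n) * E (y (Suc n))" by simp
    finally show ?case using Suc.IH by linarith
  qed
  have main: "E X \<le> k * exp (- real n)" for n
  proof -
    have bern: "1 + real n * (b - 1) \<le> b^n"
      using Bernoulli_inequality[of "b - 1" n] b1 by simp
    have "\<nu> * X * (b - 1) \<ge> ln 2 + 1"
      using X2 nu b1 by (simp add: divide_le_eq mult.commute mult.left_commute)
    then have "real n * (ln 2 + 1) \<le> real n * (\<nu> * X * (b - 1))"
      by (simp add: mult_left_mono)
    also have "\<dots> \<le> \<nu> * X * (1 + real n * (b - 1))"
      using nu X1 by (simp add: algebra_simps)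
    also have "\<dots> \<le> \<nu> * X * b^n"
      using bern nu X1 by (intro mult_left_mono) auto
    finally have ineq: "real n * (ln 2 + 1) \<le> \<nu> * y n" unfolding y_def by (simp add: mult.assoc)
    have "E X \<le> 2^n * E (y n)" by (rule ind)
    also have "\<dots> \<le> 2^n * (k * exp (- \<nu> * y n))"
      using bd yge[of n] X1 by (intro mult_left_mono) auto
    also have "\<dots> \<le> 2^n * (k * exp (- (real n * (ln 2 + 1))))"
      using ineq kp by (intro mult_left_mono) auto
    also have "\<dots> = k * (exp (real n * ln 2) * exp (- (real n * (ln 2 + 1))))"
      by (simp add: exp_of_nat_mult)
    also have "\<dots> = k * exp (- real n)"
      by (simp add: exp_add[symmetric] algebra_simps)
    finally show ?thesis .
  qed
  have EX: "E X > 0" using pos X1 by auto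
  obtain n :: nat where n: "real n > k / E X" using reals_Archimedean2 by blast
  have "exp (real n) \<ge> 1 + real n" by (rule exp_ge_add_one_self)
  then have "exp (real n) > k / E X" using n by linarith
  then have "E X * exp (real n) > k" using EX by (simp add: divide_less_eq mult.commute)
  moreover have "E X * exp (real n) \<le> k"
    using main[of n] by (simp add: exp_minus field_simps)
  ultimately show False by linarith
qed

theorem corollary1:
  fixes E E' :: "real \<Rightarrow> real" and p \<alpha> k \<nu> :: real
  assumes "0 < p" "p < 1" "0 < \<alpha>" "\<alpha> < p / (1 - p)"
    and "proper_error_score E E'"
    and "\<exists>L::ereal. ((\<lambda>x. ereal (E' x / E x)) \<longlongrightarrow> L) at_top"
    and "\<forall>a. 0 < a \<and> a < 1 \<longrightarrow> (\<exists>L::ereal. ((\<lambda>x. ereal (E x / E (a * x))) \<longlongrightarrow> L) at_top)"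
    and "\<forall>a. 0 < a \<and> a < 1 \<longrightarrow> (\<exists>L::ereal. ((\<lambda>x. ereal (E' x / E' (a * x))) \<longlongrightarrow> L) at_top)"
    and "0 < k" "0 < \<nu>" "\<forall>x\<ge>0. E x \<le> k * exp (- \<nu> * x)"
  shows "undulating p \<alpha> E'"
proof -
  define a where "a = \<alpha> * (1 - p) / p"
  have a0: "0 < a" unfolding a_def using assms(1-3) by auto
  have a1: "a < 1" unfolding a_def using assms(1-4) by (simp add: divide_less_eq less_divide_eq mult.commute)
  have ap: "a * p = \<alpha> * (1 - p)" unfolding a_def using assms(1) by simp
  obtain E'' where derw: "\<forall>x\<ge>0. (E has_real_derivative E' x) (at x within {0..})"
    and sg: "\<forall>x\<ge>0. E x > 0 \<and> E' x < 0" and lim: "(E \<longlongrightarrow> 0) at_top"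
    using assms(5) unfolding proper_error_score_def by blast
  have der: "(E has_real_derivative E' x) (at x)" if "x > 0" for x
  proof -
    have "at x within {0..} = at x"
      by (rule at_within_interior) (use that in simp)
    then show ?thesis using derw that by (metis less_imp_le)
  qed
  obtain L where L: "((\<lambda>x. ereal (E' x / E' (a * x))) \<longlongrightarrow> L) at_top"
    using assms(8) a0 a1 by blast
  show ?thesis
  proof (cases "L < ereal a")
    case True
    have ev: "\<forall>\<^sub>F x in at_top. ereal (E' x / E' (a * x)) < ereal a"
      using order_tendstoD(2)[OF L True] .
    have pm: "filterlim (\<lambda>m. p * m) at_top at_top"
      by (rule filterlim_tendsto_pos_mult_at_top[OF tendsto_const assms(1) filterlim_ident])
    have "\<forall>\<^sub>F m in at_top. ereal (E' (p*m) / E' (a * (p*m))) < ereal a"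
      using filterlim_iff[THEN iffD1, OF pm, rule_format, OF ev] by simp
    then obtain z where z: "\<And>m. m \<ge> z \<Longrightarrow> E' (p*m) / E' (a * (p*m)) < a"
      unfolding eventually_at_top_linorder by auto
    have "\<forall>m. m > z \<longrightarrow> E' (p * m) / E' (\<alpha> * (1 - p) * m) < \<alpha> * (1 - p) / p"
    proof (intro allI impI)
      fix m assume "m > z"
      then have "E' (p*m) / E' (a * (p*m)) < a" using z by auto
      moreover have "a * (p*m) = \<alpha> * (1 - p) * m" using ap by (simp add: mult.assoc[symmetric])
      ultimately show "E' (p * m) / E' (\<alpha> * (1 - p) * m) < \<alpha> * (1 - p) / p"
        unfolding a_def by simp
    qed
    then show ?thesis unfolding undulating_def
      by (intro exI[of _ 0] exI[of _ z]) auto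
  next
    case False
    then have "ereal (a/2) < L" using a0 by (cases L) auto
    from order_tendstoD(1)[OF L this]
    obtain X1 where X1: "\<And>x. x \<ge> X1 \<Longrightarrow> ereal (a/2) < ereal (E' x / E' (a * x))"
      unfolding eventually_at_top_linorder by auto
    define X0 where "X0 = max X1 1"
    have "E' x < (a/2) * E' (a * x)" if "x \<ge> X0" for x
    proof -
      have "a/2 < E' x / E' (a * x)" using X1[of x] that unfolding X0_def by auto
      moreover have "E' (a*x) < 0" using sg a0 that unfolding X0_def by auto
      ultimately show ?thesis by (simp add: less_divide_eq)
    qed
    then show ?thesis
      using key_false[of a E E' k \<nu> X0] a0 a1 der sg lim assms(9-11)
      unfolding X0_def by force
  qed
qed

end
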